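(* Let $U,X,Y$ be real random variables forming a Markov chain $U-X-Y$ with $Y$ generated from $X$ through a transition kernel $W_{Y|X}$. For $l>0$ let $\hat X=\mathrm{sign}(X)\min(l,|X|)$ and let $\hat Y$ be generated from $\hat X$ through the same kernel, $\hat Y\sim W_{Y|X}(\cdot\mid\hat X)$, conditionally independent of $(U,X)$ given $\hat X$. Then $I(U;\hat Y)\to I(U;Y)$ as $l\to\infty$.
   Context: Mutual information of general random variables is $I(U;Y)=\sup_Q I(U_Q;Y_Q)$, the supremum over finite measurable partitions $Q$ of the discrete mutual information of the quantized variables. *)

theory Defs
  imports "HOL-Probability.Probability"
begin

definition finite_partition :: "real set set \<Rightarrow> bool" where
  "finite_partition Q \<longleftrightarrow> finite Q \<and> Q \<subseteq> sets borel \<and> \<Union>Q = UNIV \<and> disjoint Q \<and> {} \<notin> Q"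

text \<open>Discrete mutual information (natural log, convention 0 log 0 = 0) of the
  quantizations of U by Q and of Y by R.\<close>
definition disc_MI :: "'a measure \<Rightarrow> ('a \<Rightarrow> real) \<Rightarrow> ('a \<Rightarrow> real) \<Rightarrow> real set set \<Rightarrow> real set set \<Rightarrow> real" where
  "disc_MI M U Y Q R =
     (\<Sum>A\<in>Q. \<Sum>B\<in>R.
        let p = measure M {\<omega>\<in>space M. U \<omega> \<in> A \<and> Y \<omega> \<in> B} in
        p * ln (p / (measure M {\<omega>\<in>space M. U \<omega> \<in> A} * measure M {\<omega>\<in>space M. Y \<omega> \<in> B})))"

definition gen_MI :: "'a measure \<Rightarrow> ('a \<Rightarrow> real) \<Rightarrow> ('a \<Rightarrow> real) \<Rightarrow> ereal" where
  "gen_MI M U Y = (SUP QR \<in> {(Q, R). finite_partition Q \<and> finite_partition R}.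
                      ereal (disc_MI M U Y (fst QR) (snd QR)))"

definition clip :: "real \<Rightarrow> real \<Rightarrow> real" where
  "clip l x = sgn x * min l \<bar>x\<bar>"

end

theory Submission
  imports Defs "HOL-Real_Asymp.Real_Asymp"
begin

definition eta :: "real \<Rightarrow> real" where "eta x = x * ln x"

lemma eta_0[simp]: "eta 0 = 0" and eta_1[simp]: "eta 1 = 0" by (simp_all add: eta_def)

lemma eta_mult: assumes "0 \<le> x" "0 \<le> y" shows "eta (x*y) = y * eta x + x * eta y"
proof (cases "x = 0 \<or> y = 0")
  case True then show ?thesis by (auto simp: eta_def)
next
  case False then have "0 < x" "0 < y" using assms by auto
  then show ?thesis by (simp add: eta_def ln_mult algebra_simps)
qed

lemma eta_super2: assumes "0 \<le> x" "0 \<le> y" shows "eta x + eta y \<le> eta (x+y)"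
proof -
  have a: "x * ln x \<le> x * ln (x+y)" if "0 \<le> x" "0 \<le> y" for x y :: real
  proof (cases "x = 0")
    case False then have "0 < x" using that by auto
    then show ?thesis using that by (intro mult_left_mono) auto
  qed simp
  show ?thesis using a[OF assms] a[OF assms(2,1)] by (simp add: eta_def algebra_simps)
qed

lemma eta_super: assumes "finite S" "\<And>s. s \<in> S \<Longrightarrow> 0 \<le> f s"
  shows "(\<Sum>s\<in>S. eta (f s)) \<le> eta (\<Sum>s\<in>S. f s)"
  using assms
proof (induction S rule: finite_induct)
  case (insert a S)
  have "(\<Sum>s\<in>insert a S. eta (f s)) = eta (f a) + (\<Sum>s\<in>S. eta (f s))" using insert by simp
  also have "\<dots> \<le> eta (f a) + eta (\<Sum>s\<in>S. f s)" using insert by simp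
  also have "\<dots> \<le> eta (f a + (\<Sum>s\<in>S. f s))"
    by (rule eta_super2) (use insert in \<open>auto intro: sum_nonneg\<close>)
  finally show ?case using insert by simp
qed simp

lemma fib_term: assumes "0 \<le> p" "p \<le> r" "p \<le> c" "0 < T"
  shows "p - r*c/T \<le> eta p - p * ln r - p * ln c + p * ln T"
proof (cases "p = 0")
  case True then show ?thesis using assms by simp
next
  case False
  then have p: "0 < p" using assms by auto
  then have r: "0 < r" and c: "0 < c" using assms by auto
  have "ln (r*c/(p*T)) \<le> r*c/(p*T) - 1" by (rule ln_le_minus_one) (use p r c assms in auto)
  then have "p * ln (r*c/(p*T)) \<le> p * (r*c/(p*T) - 1)" using p by (intro mult_left_mono) auto
  moreover have "ln (r*c/(p*T)) = ln r + ln c - ln p - ln T"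
    using p r c assms by (simp add: ln_div ln_mult)
  moreover have "p * (r*c/(p*T) - 1) = r*c/T - p" using p by (simp add: field_simps)
  ultimately have "p * (ln r + ln c - ln p - ln T) \<le> r*c/T - p" by simp
  then show ?thesis by (simp add: eta_def algebra_simps)
qed

lemma fib: assumes "finite Z" "finite X" "\<And>z x. z\<in>Z \<Longrightarrow> x\<in>X \<Longrightarrow> 0 \<le> p z x"
  shows "(\<Sum>x\<in>X. eta (\<Sum>z\<in>Z. p z x)) - eta (\<Sum>z\<in>Z. \<Sum>x\<in>X. p z x)
     \<le> (\<Sum>z\<in>Z. (\<Sum>x\<in>X. eta (p z x)) - eta (\<Sum>x\<in>X. p z x))"
proof -
  define r where "r z = (\<Sum>x\<in>X. p z x)" for z
  define c where "c x = (\<Sum>z\<in>Z. p z x)" for x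
  define T where "T = (\<Sum>z\<in>Z. r z)"
  have Tc: "T = (\<Sum>x\<in>X. c x)" unfolding T_def r_def c_def by (rule sum.swap)
  have r0: "0 \<le> r z" if "z \<in> Z" for z unfolding r_def using assms that by (auto intro: sum_nonneg)
  have c0: "0 \<le> c x" if "x \<in> X" for x unfolding c_def using assms that by (auto intro: sum_nonneg)
  show ?thesis
  proof (cases "T = 0")
    case True
    then have "\<forall>z\<in>Z. r z = 0" unfolding T_def using r0 assms by (subst sum_nonneg_eq_0_iff[symmetric]) auto
    then have z: "p z x = 0" if "z \<in> Z" "x \<in> X" for z x
      using that assms unfolding r_def by (auto simp: sum_nonneg_eq_0_iff)
    show ?thesis by (simp add: z cong: sum.cong)
  next
    case False
    then have T: "0 < T" using r0 unfolding T_def by (metis order_le_less sum_nonneg)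
    have pr: "p z x \<le> r z" if "z\<in>Z" "x\<in>X" for z x
      unfolding r_def using that assms by (intro member_le_sum) auto
    have pc: "p z x \<le> c x" if "z\<in>Z" "x\<in>X" for z x
      unfolding c_def using that assms by (intro member_le_sum) auto
    have "(\<Sum>z\<in>Z. \<Sum>x\<in>X. p z x - r z * c x / T) \<le>
          (\<Sum>z\<in>Z. \<Sum>x\<in>X. eta (p z x) - p z x * ln (r z) - p z x * ln (c x) + p z x * ln T)"
      by (intro sum_mono fib_term) (use assms pr pc T in auto)
    also have "\<dots> = (\<Sum>z\<in>Z. \<Sum>x\<in>X. eta (p z x)) - (\<Sum>z\<in>Z. eta (r z)) - (\<Sum>x\<in>X. eta (c x)) + eta T"
    proof -
      have 1: "(\<Sum>z\<in>Z. \<Sum>x\<in>X. p z x * ln (r z)) = (\<Sum>z\<in>Z. eta (r z))"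
        unfolding eta_def r_def by (simp add: sum_distrib_right)
      have 2: "(\<Sum>z\<in>Z. \<Sum>x\<in>X. p z x * ln (c x)) = (\<Sum>x\<in>X. eta (c x))"
        unfolding eta_def c_def by (subst sum.swap) (simp add: sum_distrib_right)
      have 3: "(\<Sum>z\<in>Z. \<Sum>x\<in>X. p z x * ln T) = eta T"
        unfolding eta_def T_def r_def by (simp add: sum_distrib_right)
      show ?thesis by (simp add: sum_subtractf sum.distrib 1 2 3)
    qed
    finally have *: "(\<Sum>z\<in>Z. \<Sum>x\<in>X. p z x - r z * c x / T) \<le>
         (\<Sum>z\<in>Z. \<Sum>x\<in>X. eta (p z x)) - (\<Sum>z\<in>Z. eta (r z)) - (\<Sum>x\<in>X. eta (c x)) + eta T" .
    have "(\<Sum>z\<in>Z. \<Sum>x\<in>X. p z x - r z * c x / T) = T - (\<Sum>z\<in>Z. r z) * (\<Sum>x\<in>X. c x) / T"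
      by (simp add: sum_subtractf r_def[symmetric] T_def[symmetric] sum_divide_distrib[symmetric]
          sum_distrib_left[symmetric] sum_distrib_right[symmetric])
    also have "\<dots> = 0" using T by (simp add: Tc[symmetric] T_def[symmetric])
    finally show ?thesis using * unfolding r_def c_def T_def by (simp add: sum_subtractf)
  qed
qed


lemma eta_fun: "eta = (\<lambda>x. x * ln x)" by (rule ext) (simp add: eta_def)

lemma eta_cont: "continuous_on {0..} eta"
proof -
  have "continuous (at x within {0..}) eta" if "x \<in> {0..}" for x
  proof (cases "x = 0")
    case True
    have "((\<lambda>x::real. x * ln x) \<longlongrightarrow> 0) (at_right 0)" by real_asymp
    then show ?thesis using True by (simp add: continuous_within at_within_Ici_at_right eta_fun)
  next
    case False
    then have "0 < x" using that by auto
    then have "isCont eta x" unfolding eta_fun by (auto intro!: continuous_intros)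
    then show ?thesis by (rule continuous_at_imp_continuous_at_within)
  qed
  then show ?thesis by (simp add: continuous_on_eq_continuous_within)
qed

lemma eta_tendsto: assumes "(f \<longlongrightarrow> c) F" "\<forall>\<^sub>F x in F. 0 \<le> f x" "0 \<le> c"
  shows "((\<lambda>x. eta (f x)) \<longlongrightarrow> eta c) F"
  by (rule continuous_on_tendsto_compose[OF eta_cont assms(1)]) (use assms in auto)

lemma prod_row: assumes "finite R" "finite Q" "\<And>B. B \<in> R \<Longrightarrow> 0 \<le> w B" "\<And>A. A \<in> Q \<Longrightarrow> 0 \<le> q A"
  "(\<Sum>B\<in>R. w B) = 1"
  shows "(\<Sum>B\<in>R. (\<Sum>A\<in>Q. eta (w B * q A)) - eta (\<Sum>A\<in>Q. w B * q A))
       = (\<Sum>A\<in>Q. eta (q A)) - eta (\<Sum>A\<in>Q. q A)"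
proof -
  have "(\<Sum>A\<in>Q. eta (w B * q A)) - eta (\<Sum>A\<in>Q. w B * q A) = w B * ((\<Sum>A\<in>Q. eta (q A)) - eta (\<Sum>A\<in>Q. q A))"
    if "B \<in> R" for B
  proof -
    have "(\<Sum>A\<in>Q. eta (w B * q A)) = (\<Sum>A\<in>Q. q A * eta (w B) + w B * eta (q A))"
      by (intro sum.cong refl eta_mult) (use assms that in auto)
    also have "\<dots> = (\<Sum>A\<in>Q. q A) * eta (w B) + w B * (\<Sum>A\<in>Q. eta (q A))"
      by (simp add: sum.distrib sum_distrib_left sum_distrib_right)
    finally have 1: "(\<Sum>A\<in>Q. eta (w B * q A)) = (\<Sum>A\<in>Q. q A) * eta (w B) + w B * (\<Sum>A\<in>Q. eta (q A))" .
    have "eta (\<Sum>A\<in>Q. w B * q A) = eta (w B * (\<Sum>A\<in>Q. q A))" by (simp add: sum_distrib_left)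
    also have "\<dots> = (\<Sum>A\<in>Q. q A) * eta (w B) + w B * eta (\<Sum>A\<in>Q. q A)"
      by (rule eta_mult) (use assms that in \<open>auto intro: sum_nonneg\<close>)
    finally show ?thesis using 1 by (simp add: algebra_simps)
  qed
  then have "(\<Sum>B\<in>R. (\<Sum>A\<in>Q. eta (w B * q A)) - eta (\<Sum>A\<in>Q. w B * q A))
      = (\<Sum>B\<in>R. w B * ((\<Sum>A\<in>Q. eta (q A)) - eta (\<Sum>A\<in>Q. q A)))" by (rule sum.cong[OF refl])
  also have "\<dots> = (\<Sum>A\<in>Q. eta (q A)) - eta (\<Sum>A\<in>Q. q A)"
    by (simp add: sum_distrib_right[symmetric] assms(5))
  finally show ?thesis .
qed

lemma neg_term: assumes "0 \<le> p" "p \<le> a" "p \<le> b"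
  shows "p * ln (p / (a * b)) = eta p - p * ln a - p * ln b"
proof (cases "p = 0")
  case False
  then have "0 < p" "0 < a" "0 < b" using assms by auto
  then show ?thesis by (simp add: eta_def ln_div ln_mult algebra_simps)
qed (simp)

subsection \<open>Events\<close>

definition ev :: "'a measure \<Rightarrow> ('a \<Rightarrow> real) \<Rightarrow> real set \<Rightarrow> 'a set" where
  "ev M V A = {\<omega>\<in>space M. V \<omega> \<in> A}"

lemma ev_sub: "ev M V A \<subseteq> space M" by (auto simp: ev_def)
lemma ev_space[simp]: "space M \<inter> ev M V A = ev M V A" "ev M V A \<inter> space M = ev M V A"
  using ev_sub[of M V A] by blast+
lemma ev_space2[simp]: "S \<inter> ev M V A \<inter> space M = S \<inter> ev M V A" "space M \<inter> ev M V A \<inter> S = ev M V A \<inter> S"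
  using ev_sub[of M V A] by blast+
lemma ev_space3[simp]: "space M \<inter> (ev M V A \<inter> S) = ev M V A \<inter> S" "S \<inter> (ev M V A \<inter> space M) = S \<inter> ev M V A"
  using ev_sub[of M V A] by blast+
lemma ev_UNIV[simp]: "ev M V UNIV = space M" by (auto simp: ev_def)
lemma ev_sets[intro]: "V \<in> borel_measurable M \<Longrightarrow> A \<in> sets borel \<Longrightarrow> ev M V A \<in> sets M"
proof -
  assume "V \<in> borel_measurable M" "A \<in> sets borel"
  then have "V -` A \<inter> space M \<in> sets M" by (rule measurable_sets)
  moreover have "V -` A \<inter> space M = ev M V A" by (auto simp: ev_def)
  ultimately show ?thesis by simp
qed

lemma fp_unique: assumes "finite_partition Q" "A \<in> Q" "B \<in> Q" "x \<in> A" "x \<in> B" shows "A = B"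
  using assms unfolding finite_partition_def disjoint_def by blast

lemma fp_ex: assumes "finite_partition Q" obtains A where "A \<in> Q" "x \<in> A"
  using assms unfolding finite_partition_def by blast

lemma fp_sets: "finite_partition Q \<Longrightarrow> A \<in> Q \<Longrightarrow> A \<in> sets borel"
  unfolding finite_partition_def by blast

lemma fp_finite: "finite_partition Q \<Longrightarrow> finite Q"
  unfolding finite_partition_def by blast

lemma psum: assumes "prob_space M" "finite_partition Q" "V \<in> borel_measurable M" "S \<in> sets M" "T \<in> sets M"
  shows "(\<Sum>A\<in>Q. measure M (S \<inter> ev M V A \<inter> T)) = measure M (S \<inter> T)"
proof -
  interpret prob_space M by fact
  have "measure M (\<Union>A\<in>Q. S \<inter> ev M V A \<inter> T) = (\<Sum>A\<in>Q. measure M (S \<inter> ev M V A \<inter> T))"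
  proof (rule finite_measure_finite_Union)
    show "finite Q" using assms(2) by (rule fp_finite)
    show "(\<lambda>A. S \<inter> ev M V A \<inter> T) ` Q \<subseteq> sets M"
      using assms fp_sets by blast
    show "disjoint_family_on (\<lambda>A. S \<inter> ev M V A \<inter> T) Q"
      unfolding disjoint_family_on_def ev_def using fp_unique[OF assms(2)] by blast
  qed
  moreover have "(\<Union>A\<in>Q. S \<inter> ev M V A \<inter> T) = S \<inter> T"
  proof
    show "S \<inter> T \<subseteq> (\<Union>A\<in>Q. S \<inter> ev M V A \<inter> T)"
    proof
      fix x assume x: "x \<in> S \<inter> T"
      then have "x \<in> space M" using assms(4) sets.sets_into_space by blast
      obtain A where "A \<in> Q" "V x \<in> A" using fp_ex[OF assms(2)] by metis
      then show "x \<in> (\<Union>A\<in>Q. S \<inter> ev M V A \<inter> T)" using x \<open>x \<in> space M\<close> by (auto simp: ev_def)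
    qed
  qed auto
  ultimately show ?thesis by simp
qed

lemma wsum: assumes "prob_space N" "sets N = sets borel" "finite_partition R"
  shows "(\<Sum>B\<in>R. measure N B) = 1"
proof -
  interpret N: prob_space N by fact
  have sp: "space N = UNIV" using sets_eq_imp_space_eq[OF assms(2)] by simp
  have "measure N (\<Union>B\<in>R. B) = (\<Sum>B\<in>R. measure N B)"
  proof (rule N.finite_measure_finite_Union)
    show "finite R" using assms(3) by (rule fp_finite)
    show "(\<lambda>B. B) ` R \<subseteq> sets N" using assms(2,3) fp_sets by auto
    show "disjoint_family_on (\<lambda>B. B) R"
      unfolding disjoint_family_on_def using fp_unique[OF assms(3)] by blast
  qed
  moreover have "(\<Union>B\<in>R. B) = UNIV" using assms(3) unfolding finite_partition_def by auto
  ultimately show ?thesis using N.prob_space sp by simp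
qed

lemma neg: assumes "prob_space M" "finite_partition Q" "finite_partition R"
  "U \<in> borel_measurable M" "V \<in> borel_measurable M"
  shows "disc_MI M U V Q R = (\<Sum>A\<in>Q. \<Sum>B\<in>R. eta (measure M (ev M U A \<inter> ev M V B)))
     - (\<Sum>A\<in>Q. eta (measure M (ev M U A))) - (\<Sum>B\<in>R. eta (measure M (ev M V B)))"
proof -
  interpret prob_space M by fact
  have e1: "{\<omega>\<in>space M. U \<omega> \<in> A \<and> V \<omega> \<in> B} = ev M U A \<inter> ev M V B" for A B by (auto simp: ev_def)
  have e2: "{\<omega>\<in>space M. W \<omega> \<in> A} = ev M W A" for W A by (simp add: ev_def)
  have sa: "(\<Sum>B\<in>R. measure M (ev M U A \<inter> ev M V B)) = measure M (ev M U A)" if "A \<in> Q" for A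
    using psum[OF assms(1,3,5), of "ev M U A" "space M"] assms fp_sets[OF assms(2) that] by auto
  have sb: "(\<Sum>A\<in>Q. measure M (ev M U A \<inter> ev M V B)) = measure M (ev M V B)" if "B \<in> R" for B
    using psum[OF assms(1,2,4), of "space M" "ev M V B"] assms fp_sets[OF assms(3) that] by auto
  have "disc_MI M U V Q R = (\<Sum>A\<in>Q. \<Sum>B\<in>R. eta (measure M (ev M U A \<inter> ev M V B))
     - measure M (ev M U A \<inter> ev M V B) * ln (measure M (ev M U A))
     - measure M (ev M U A \<inter> ev M V B) * ln (measure M (ev M V B)))"
    unfolding disc_MI_def Let_def e1 e2
    by (intro sum.cong refl neg_term) (auto intro!: finite_measure_mono ev_sets[OF assms(4) fp_sets[OF assms(2)]] ev_sets[OF assms(5) fp_sets[OF assms(3)]])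
  also have "\<dots> = (\<Sum>A\<in>Q. \<Sum>B\<in>R. eta (measure M (ev M U A \<inter> ev M V B)))
     - (\<Sum>A\<in>Q. (\<Sum>B\<in>R. measure M (ev M U A \<inter> ev M V B)) * ln (measure M (ev M U A)))
     - (\<Sum>B\<in>R. (\<Sum>A\<in>Q. measure M (ev M U A \<inter> ev M V B)) * ln (measure M (ev M V B)))"
    by (simp add: sum_subtractf sum_distrib_right sum.swap[of _ R Q])
  also have "\<dots> = (\<Sum>A\<in>Q. \<Sum>B\<in>R. eta (measure M (ev M U A \<inter> ev M V B)))
     - (\<Sum>A\<in>Q. eta (measure M (ev M U A))) - (\<Sum>B\<in>R. eta (measure M (ev M V B)))"
    using sa sb by (simp add: eta_def)
  finally show ?thesis .
qed


subsection \<open>Clipping\<close>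

lemma clip_id: "\<bar>x\<bar> \<le> l \<Longrightarrow> clip l x = x"
  by (simp add: clip_def min_absorb2 sgn_mult_abs)
lemma clip_hi: "0 < l \<Longrightarrow> l < x \<Longrightarrow> clip l x = l"
  by (simp add: clip_def)
lemma clip_lo: "0 < l \<Longrightarrow> x < -l \<Longrightarrow> clip l x = -l"
  by (simp add: clip_def)

definition FS :: "real \<Rightarrow> real set set" where
  "FS l = {{-l..l}, {l<..}, {..< -l}}"

lemma FS_fp: assumes "0 < l" shows "finite_partition (FS l)"
proof -
  have "0 \<in> {-l..l}" "l+1 \<in> {l<..}" "-l-1 \<in> {..<-l}" using assms by auto
  then have "{} \<notin> FS l"
  proof -
    assume m: "0 \<in> {-l..l}" "l+1 \<in> {l<..}" "-l-1 \<in> {..<-l}"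
    show ?thesis
    proof
      assume "{} \<in> FS l"
      then have "{} = {-l..l} \<or> {} = {l<..} \<or> {} = {..<-l}" unfolding FS_def by blast
      then show False using m by blast
    qed
  qed
  moreover have "\<Union>(FS l) = UNIV" by (auto simp: FS_def)
  moreover have "disjoint (FS l)" using assms unfolding FS_def disjoint_def by auto
  ultimately show ?thesis unfolding finite_partition_def by (auto simp: FS_def)
qed

locale setting =
  fixes M :: "'a measure" and U X Y :: "'a \<Rightarrow> real"
    and Yh :: "real \<Rightarrow> 'a \<Rightarrow> real" and W :: "real \<Rightarrow> real measure"
  assumes P: "prob_space M"
    and mU: "U \<in> borel_measurable M" and mX: "X \<in> borel_measurable M" and mY: "Y \<in> borel_measurable M"
    and mYh: "\<And>l. l > 0 \<Longrightarrow> Yh l \<in> borel_measurable M"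
    and mW: "W \<in> borel \<rightarrow>\<^sub>M prob_algebra borel"
    and hY: "\<And>A B C. A \<in> sets borel \<Longrightarrow> B \<in> sets borel \<Longrightarrow> C \<in> sets borel \<Longrightarrow>
           measure M {\<omega>\<in>space M. U \<omega> \<in> A \<and> X \<omega> \<in> B \<and> Y \<omega> \<in> C}
         = (\<integral>\<omega>. indicator {\<omega>\<in>space M. U \<omega> \<in> A \<and> X \<omega> \<in> B} \<omega> * measure (W (X \<omega>)) C \<partial>M)"
    and hYh: "\<And>l A B C. l > 0 \<Longrightarrow> A \<in> sets borel \<Longrightarrow> B \<in> sets borel \<Longrightarrow> C \<in> sets borel \<Longrightarrow>
           measure M {\<omega>\<in>space M. U \<omega> \<in> A \<and> X \<omega> \<in> B \<and> Yh l \<omega> \<in> C}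
         = (\<integral>\<omega>. indicator {\<omega>\<in>space M. U \<omega> \<in> A \<and> X \<omega> \<in> B} \<omega> * measure (W (clip l (X \<omega>))) C \<partial>M)"
begin

abbreviation "P3 V F B A \<equiv> measure M (ev M X F \<inter> ev M V B \<inter> ev M U A)"

lemma Wc: "prob_space (W c)" "sets (W c) = sets borel"
proof -
  have "W c \<in> space (prob_algebra borel)" using measurable_space[OF mW, of c] by simp
  then show "prob_space (W c)" "sets (W c) = sets borel" by (auto simp: space_prob_algebra)
qed

lemma ev3: "ev M X F \<inter> ev M V B \<inter> ev M U A = {\<omega>\<in>space M. U \<omega> \<in> A \<and> X \<omega> \<in> F \<and> V \<omega> \<in> B}"
  by (auto simp: ev_def)

lemma K0: assumes "0 < l" "F \<in> sets borel" "F \<subseteq> {-l..l}" "A \<in> sets borel" "B \<in> sets borel"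
  shows "P3 (Yh l) F B A = P3 Y F B A"
proof -
  have "P3 (Yh l) F B A = (\<integral>\<omega>. indicator {\<omega>\<in>space M. U \<omega> \<in> A \<and> X \<omega> \<in> F} \<omega> * measure (W (clip l (X \<omega>))) B \<partial>M)"
    unfolding ev3 using hYh assms by blast
  also have "\<dots> = (\<integral>\<omega>. indicator {\<omega>\<in>space M. U \<omega> \<in> A \<and> X \<omega> \<in> F} \<omega> * measure (W (X \<omega>)) B \<partial>M)"
  proof (rule Bochner_Integration.integral_cong[OF refl])
    fix \<omega> assume "\<omega> \<in> space M"
    show "indicator {\<omega>\<in>space M. U \<omega> \<in> A \<and> X \<omega> \<in> F} \<omega> * measure (W (clip l (X \<omega>))) B =
          indicator {\<omega>\<in>space M. U \<omega> \<in> A \<and> X \<omega> \<in> F} \<omega> * measure (W (X \<omega>)) B"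
    proof (cases "X \<omega> \<in> F")
      case True
      then have "X \<omega> \<in> {-l..l}" using assms(3) by blast
      then have "\<bar>X \<omega>\<bar> \<le> l" by auto
      then show ?thesis by (simp add: clip_id)
    qed (simp add: indicator_def)
  qed
  also have "\<dots> = P3 Y F B A" unfolding ev3 using hY assms by simp
  finally show ?thesis .
qed

lemma Kc: assumes "0 < l" "F \<in> sets borel" "\<And>x. x \<in> F \<Longrightarrow> clip l x = c" "A \<in> sets borel" "B \<in> sets borel"
  shows "P3 (Yh l) F B A = measure (W c) B * measure M (ev M X F \<inter> ev M U A)"
proof -
  interpret prob_space M by (rule P)
  have S: "{\<omega>\<in>space M. U \<omega> \<in> A \<and> X \<omega> \<in> F} = ev M X F \<inter> ev M U A" by (auto simp: ev_def)
  have "P3 (Yh l) F B A = (\<integral>\<omega>. indicator {\<omega>\<in>space M. U \<omega> \<in> A \<and> X \<omega> \<in> F} \<omega> * measure (W (clip l (X \<omega>))) B \<partial>M)"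
    unfolding ev3 using hYh assms by blast
  also have "\<dots> = (\<integral>\<omega>. indicator (ev M X F \<inter> ev M U A) \<omega> * measure (W c) B \<partial>M)"
    unfolding S
  proof (rule Bochner_Integration.integral_cong[OF refl])
    fix \<omega> assume "\<omega> \<in> space M"
    show "indicator (ev M X F \<inter> ev M U A) \<omega> * measure (W (clip l (X \<omega>))) B =
          indicator (ev M X F \<inter> ev M U A) \<omega> * measure (W c) B"
      using assms(3) by (cases "X \<omega> \<in> F") (auto simp: indicator_def ev_def)
  qed
  also have "\<dots> = (\<integral>\<omega>. indicator (ev M X F \<inter> ev M U A) \<omega> \<partial>M) * measure (W c) B"
    by (rule integral_mult_left_zero)
  also have "\<dots> = measure M (ev M X F \<inter> ev M U A) * measure (W c) B"
    by (simp add: Bochner_Integration.integral_indicator Int_assoc)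
  finally show ?thesis by simp
qed

end


context setting begin

lemma upper:
  assumes l: "0 < l" and Q: "finite_partition Q" and R: "finite_partition R"
  shows "disc_MI M U (Yh l) Q R \<le> disc_MI M U Y Q R - (\<Sum>F\<in>FS l. eta (measure M (ev M X F)))"
proof -
  interpret prob_space M by (rule P)
  define Fs where "Fs = FS l"
  have Fs: "finite_partition Fs" unfolding Fs_def using l by (rule FS_fp)
  note mV = mYh[OF l]
  have fQ: "finite Q" and fR: "finite R" and fF: "finite Fs" using Q R Fs by (auto intro: fp_finite)
  have sQ: "A \<in> sets borel" if "A \<in> Q" for A using fp_sets[OF Q that] .
  have sR: "A \<in> sets borel" if "A \<in> R" for A using fp_sets[OF R that] .
  have sF: "A \<in> sets borel" if "A \<in> Fs" for A using fp_sets[OF Fs that] .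
  have eU: "ev M U A \<in> sets M" if "A \<in> sets borel" for A using ev_sets[OF mU that] .
  have eX: "ev M X A \<in> sets M" if "A \<in> sets borel" for A using ev_sets[OF mX that] .
  have m1: "(\<Sum>F\<in>Fs. P3 V F B A) = measure M (ev M V B \<inter> ev M U A)"
    if "V \<in> borel_measurable M" "A \<in> sets borel" "B \<in> sets borel" for V A B
    using psum[OF P Fs mX, of "space M" "ev M V B \<inter> ev M U A"] that eU
      sets.Int[OF ev_sets[OF that(1) that(3)] eU[OF that(2)]]
    by (simp add: Int_assoc)
  have m2: "(\<Sum>A\<in>Q. P3 V F B A) = measure M (ev M X F \<inter> ev M V B)"
    if "V \<in> borel_measurable M" "F \<in> sets borel" "B \<in> sets borel" for V F B
    using psum[OF P Q mU, of "ev M X F \<inter> ev M V B" "space M"] that eX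
      sets.Int[OF eX[OF that(2)] ev_sets[OF that(1) that(3)]]
    by (simp add: Int_assoc)
  have m3: "(\<Sum>B\<in>R. P3 V F B A) = measure M (ev M X F \<inter> ev M U A)"
    if "V \<in> borel_measurable M" "F \<in> sets borel" "A \<in> sets borel" for V F A
    using psum[OF P R that(1), of "ev M X F" "ev M U A"] that eX eU by simp
  have m4: "(\<Sum>B\<in>R. measure M (ev M X F \<inter> ev M V B)) = measure M (ev M X F)"
    if "V \<in> borel_measurable M" "F \<in> sets borel" for V F
    using psum[OF P R that(1), of "ev M X F" "space M"] that eX by simp
  have m5: "(\<Sum>F\<in>Fs. measure M (ev M X F \<inter> ev M V B)) = measure M (ev M V B)"
    if "V \<in> borel_measurable M" "B \<in> sets borel" for V B
    using psum[OF P Fs mX, of "space M" "ev M V B"] that by (simp add: ev_sets)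
  have m6: "(\<Sum>B\<in>R. measure M (ev M V B)) = 1" if "V \<in> borel_measurable M" for V
    using psum[OF P R that, of "space M" "space M"] by (simp add: prob_space)
  define rowt where "rowt V F B = (\<Sum>A\<in>Q. eta (P3 V F B A)) - eta (\<Sum>A\<in>Q. P3 V F B A)" for V F B
  define CB where "CB V = (\<Sum>B\<in>R. (\<Sum>A\<in>Q. eta (measure M (ev M V B \<inter> ev M U A))) - eta (measure M (ev M V B)))" for V
  define Na where "Na = (\<Sum>A\<in>Q. eta (measure M (ev M U A)))"
  have discCB: "disc_MI M U V Q R = CB V - Na" if "V \<in> borel_measurable M" for V
    unfolding neg[OF P Q R mU that] CB_def Na_def
    by (simp add: sum_subtractf sum.swap[of _ Q R] Int_commute)
  have I1: "CB V \<le> (\<Sum>B\<in>R. \<Sum>F\<in>Fs. rowt V F B)" if V: "V \<in> borel_measurable M" for V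
    unfolding CB_def rowt_def
  proof (rule sum_mono)
    fix B assume B: "B \<in> R"
    have "(\<Sum>A\<in>Q. eta (\<Sum>F\<in>Fs. P3 V F B A)) - eta (\<Sum>F\<in>Fs. \<Sum>A\<in>Q. P3 V F B A)
        \<le> (\<Sum>F\<in>Fs. (\<Sum>A\<in>Q. eta (P3 V F B A)) - eta (\<Sum>A\<in>Q. P3 V F B A))"
      by (rule fib[OF fF fQ]) simp
    moreover have "(\<Sum>F\<in>Fs. \<Sum>A\<in>Q. P3 V F B A) = measure M (ev M V B)"
      using m2[OF V sF sR[OF B]] m5[OF V sR[OF B]] by simp
    moreover have "(\<Sum>A\<in>Q. eta (\<Sum>F\<in>Fs. P3 V F B A)) = (\<Sum>A\<in>Q. eta (measure M (ev M V B \<inter> ev M U A)))"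
      using m1[OF V sQ sR[OF B]] by simp
    ultimately show "(\<Sum>A\<in>Q. eta (measure M (ev M V B \<inter> ev M U A))) - eta (measure M (ev M V B))
        \<le> (\<Sum>F\<in>Fs. (\<Sum>A\<in>Q. eta (P3 V F B A)) - eta (\<Sum>A\<in>Q. P3 V F B A))" by simp
  qed
  have I2c: "(\<Sum>B\<in>R. rowt (Yh l) F B) \<le> (\<Sum>B\<in>R. rowt Y F B)"
    if F: "F \<in> sets borel" and c: "\<And>x. x \<in> F \<Longrightarrow> clip l x = c" for F c
  proof -
    define q where "q A = measure M (ev M X F \<inter> ev M U A)" for A
    have "(\<Sum>B\<in>R. rowt (Yh l) F B) = (\<Sum>B\<in>R. (\<Sum>A\<in>Q. eta (measure (W c) B * q A)) - eta (\<Sum>A\<in>Q. measure (W c) B * q A))"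
      unfolding rowt_def q_def using Kc[OF l F c] sQ sR by (auto intro!: sum.cong)
    also have "\<dots> = (\<Sum>A\<in>Q. eta (q A)) - eta (\<Sum>A\<in>Q. q A)"
      by (rule prod_row[OF fR fQ]) (auto simp: q_def wsum[OF Wc R])
    also have "\<dots> \<le> (\<Sum>B\<in>R. rowt Y F B)"
    proof -
      have "(\<Sum>A\<in>Q. eta (\<Sum>B\<in>R. P3 Y F B A)) - eta (\<Sum>B\<in>R. \<Sum>A\<in>Q. P3 Y F B A)
        \<le> (\<Sum>B\<in>R. (\<Sum>A\<in>Q. eta (P3 Y F B A)) - eta (\<Sum>A\<in>Q. P3 Y F B A))"
        by (rule fib[OF fR fQ]) simp
      moreover have "(\<Sum>B\<in>R. P3 Y F B A) = q A" if "A \<in> Q" for A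
        unfolding q_def using m3[OF mY F sQ[OF that]] .
      moreover have "(\<Sum>B\<in>R. \<Sum>A\<in>Q. P3 Y F B A) = (\<Sum>A\<in>Q. \<Sum>B\<in>R. P3 Y F B A)" by (rule sum.swap)
      ultimately show ?thesis unfolding rowt_def by simp
    qed
    finally show ?thesis .
  qed
  have I2: "(\<Sum>F\<in>Fs. \<Sum>B\<in>R. rowt (Yh l) F B) \<le> (\<Sum>F\<in>Fs. \<Sum>B\<in>R. rowt Y F B)"
  proof (rule sum_mono)
    fix F assume "F \<in> Fs"
    then have "F = {-l..l} \<or> F = {l<..} \<or> F = {..<-l}" unfolding Fs_def FS_def by blast
    then show "(\<Sum>B\<in>R. rowt (Yh l) F B) \<le> (\<Sum>B\<in>R. rowt Y F B)"
    proof (elim disjE)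
      assume F: "F = {-l..l}"
      have "rowt (Yh l) F B = rowt Y F B" if "B \<in> R" for B
        unfolding rowt_def F using K0[OF l _ _ sQ sR[OF that]] by simp
      then show ?thesis by simp
    next
      assume F: "F = {l<..}"
      show ?thesis unfolding F by (rule I2c[of _ l]) (auto intro: clip_hi[OF l])
    next
      assume F: "F = {..<-l}"
      show ?thesis unfolding F by (rule I2c[of _ "-l"]) (auto intro: clip_lo[OF l])
    qed
  qed
  have I3: "(\<Sum>B\<in>R. \<Sum>F\<in>Fs. rowt Y F B) \<le> CB Y - (\<Sum>F\<in>Fs. eta (measure M (ev M X F)))"
  proof -
    have a: "(\<Sum>B\<in>R. \<Sum>F\<in>Fs. \<Sum>A\<in>Q. eta (P3 Y F B A)) \<le> (\<Sum>B\<in>R. \<Sum>A\<in>Q. eta (measure M (ev M Y B \<inter> ev M U A)))"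
    proof (rule sum_mono)
      fix B assume B: "B \<in> R"
      have "(\<Sum>F\<in>Fs. \<Sum>A\<in>Q. eta (P3 Y F B A)) = (\<Sum>A\<in>Q. \<Sum>F\<in>Fs. eta (P3 Y F B A))" by (rule sum.swap)
      also have "\<dots> \<le> (\<Sum>A\<in>Q. eta (\<Sum>F\<in>Fs. P3 Y F B A))"
        by (intro sum_mono eta_super fF) simp
      also have "\<dots> = (\<Sum>A\<in>Q. eta (measure M (ev M Y B \<inter> ev M U A)))"
        using m1[OF mY sQ sR[OF B]] by simp
      finally show "(\<Sum>F\<in>Fs. \<Sum>A\<in>Q. eta (P3 Y F B A)) \<le> (\<Sum>A\<in>Q. eta (measure M (ev M Y B \<inter> ev M U A)))" .
    qed
    have b: "(\<Sum>F\<in>Fs. eta (measure M (ev M X F))) + (\<Sum>B\<in>R. eta (measure M (ev M Y B)))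
        \<le> (\<Sum>B\<in>R. \<Sum>F\<in>Fs. eta (measure M (ev M X F \<inter> ev M Y B)))"
    proof -
      have "(\<Sum>F\<in>Fs. eta (\<Sum>B\<in>R. measure M (ev M X F \<inter> ev M Y B))) - eta (\<Sum>B\<in>R. \<Sum>F\<in>Fs. measure M (ev M X F \<inter> ev M Y B))
        \<le> (\<Sum>B\<in>R. (\<Sum>F\<in>Fs. eta (measure M (ev M X F \<inter> ev M Y B))) - eta (\<Sum>F\<in>Fs. measure M (ev M X F \<inter> ev M Y B)))"
        by (rule fib[OF fR fF]) simp
      moreover have "(\<Sum>F\<in>Fs. eta (\<Sum>B\<in>R. measure M (ev M X F \<inter> ev M Y B))) = (\<Sum>F\<in>Fs. eta (measure M (ev M X F)))"
        using m4[OF mY sF] by simp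
      moreover have "(\<Sum>B\<in>R. \<Sum>F\<in>Fs. measure M (ev M X F \<inter> ev M Y B)) = 1"
        using m5[OF mY sR] m6[OF mY] by simp
      moreover have "(\<Sum>B\<in>R. eta (\<Sum>F\<in>Fs. measure M (ev M X F \<inter> ev M Y B))) = (\<Sum>B\<in>R. eta (measure M (ev M Y B)))"
        using m5[OF mY sR] by simp
      ultimately show ?thesis by (simp add: sum_subtractf)
    qed
    have "(\<Sum>B\<in>R. \<Sum>F\<in>Fs. rowt Y F B) = (\<Sum>B\<in>R. \<Sum>F\<in>Fs. \<Sum>A\<in>Q. eta (P3 Y F B A))
        - (\<Sum>B\<in>R. \<Sum>F\<in>Fs. eta (measure M (ev M X F \<inter> ev M Y B)))"
      unfolding rowt_def using m2[OF mY sF sR] by (simp add: sum_subtractf)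
    also have "\<dots> \<le> CB Y - (\<Sum>F\<in>Fs. eta (measure M (ev M X F)))"
      using a b unfolding CB_def by (simp add: sum_subtractf)
    finally show ?thesis .
  qed
  have e1: "(\<Sum>B\<in>R. \<Sum>F\<in>Fs. rowt (Yh l) F B) = (\<Sum>F\<in>Fs. \<Sum>B\<in>R. rowt (Yh l) F B)" by (rule sum.swap)
  have e2: "(\<Sum>B\<in>R. \<Sum>F\<in>Fs. rowt Y F B) = (\<Sum>F\<in>Fs. \<Sum>B\<in>R. rowt Y F B)" by (rule sum.swap)
  have d1: "disc_MI M U (Yh l) Q R = CB (Yh l) - Na" by (rule discCB[OF mV])
  have d2: "disc_MI M U Y Q R = CB Y - Na" by (rule discCB[OF mY])
  have "disc_MI M U (Yh l) Q R \<le> disc_MI M U Y Q R - (\<Sum>F\<in>Fs. eta (measure M (ev M X F)))"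
    using d1 d2 e1 e2 I1[OF mV] I2 I3 by linarith
  then show ?thesis unfolding Fs_def .
qed

end


lemma sum_FS: assumes "0 < l" shows "(\<Sum>F\<in>FS l. g F) = g {-l..l} + g {l<..} + g {..<-l}"
proof -
  have "{-l..l} \<noteq> {l<..}" "{-l..l} \<noteq> {..<-l}" "{l<..} \<noteq> {..<-l}"
  proof -
    have "l \<in> {-l..l}" "l \<notin> {l<..}" "l \<notin> {..<-l}" "l+1 \<in> {l<..}" "l+1 \<notin> {..<-l}" using assms by auto
    then show "{-l..l} \<noteq> {l<..}" "{-l..l} \<noteq> {..<-l}" "{l<..} \<noteq> {..<-l}" by metis+
  qed
  then show ?thesis unfolding FS_def by (simp add: add.assoc)
qed

context setting begin

lemma m1': assumes "0 < l" "V \<in> borel_measurable M" "A \<in> sets borel" "B \<in> sets borel"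
  shows "(\<Sum>F\<in>FS l. P3 V F B A) = measure M (ev M V B \<inter> ev M U A)"
  using psum[OF P FS_fp[OF assms(1)] mX, of "space M" "ev M V B \<inter> ev M U A"] assms
      sets.Int[OF ev_sets[OF assms(2) assms(4)] ev_sets[OF mU assms(3)]]
  by (simp add: Int_assoc)

definition "tail l = measure M (ev M X {l<..}) + measure M (ev M X {..<-l})"

lemma tail_bound: assumes "0 < l" "A \<in> sets borel" "B \<in> sets borel"
  shows "\<bar>measure M (ev M (Yh l) B \<inter> ev M U A) - measure M (ev M Y B \<inter> ev M U A)\<bar> \<le> tail l"
proof -
  interpret prob_space M by (rule P)
  have b: "\<bar>P3 (Yh l) F B A - P3 Y F B A\<bar> \<le> measure M (ev M X F)" if "F \<in> sets borel" for F
  proof -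
    have "P3 V F B A \<le> measure M (ev M X F)" if "V \<in> borel_measurable M" for V
      by (rule finite_measure_mono) (use \<open>F \<in> sets borel\<close> mX in auto)
    then show ?thesis using mY mYh[OF assms(1)] by (smt (verit) measure_nonneg)
  qed
  have "measure M (ev M (Yh l) B \<inter> ev M U A) - measure M (ev M Y B \<inter> ev M U A)
     = (P3 (Yh l) {l<..} B A - P3 Y {l<..} B A) + (P3 (Yh l) {..<-l} B A - P3 Y {..<-l} B A)"
    using m1'[OF assms(1) mYh[OF assms(1)] assms(2,3)] m1'[OF assms(1) mY assms(2,3)]
      K0[OF assms(1) _ _ assms(2,3), of "{-l..l}"]
    by (simp add: sum_FS[OF assms(1)])
  then show ?thesis unfolding tail_def using b[of "{l<..}"] b[of "{..<-l}"] by simp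
qed

lemma tail_lim: "(tail \<longlongrightarrow> 0) at_top"
proof -
  interpret prob_space M by (rule P)
  define D where "D = distr M borel X"
  interpret D: real_distribution D unfolding D_def using mX by simp
  have evD: "measure M (ev M X S) = measure D S" if "S \<in> sets borel" for S
    unfolding D_def using measure_distr[OF mX that] by (simp add: ev_def vimage_def Int_def conj_commute)
  have t1: "measure D {l<..} = 1 - cdf D l" for l
  proof -
    have "measure D {l<..} = measure D (space D - {..l})" by (simp add: Compl_eq_Diff_UNIV[symmetric] Compl_atMost)
    also have "\<dots> = 1 - measure D {..l}" by (subst D.prob_compl) auto
    finally show ?thesis by (simp add: cdf_def)
  qed
  have t2: "measure D {..<-l} \<le> cdf D (-l)" for l
    unfolding cdf_def by (rule D.finite_measure_mono) auto
  have c1: "((\<lambda>l. measure D {l<..}) \<longlongrightarrow> 0) at_top"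
    unfolding t1 using tendsto_diff[OF tendsto_const D.cdf_lim_at_top_prob, of 1] by simp
  have c2': "((\<lambda>l. cdf D (-l)) \<longlongrightarrow> 0) at_top"
    by (rule filterlim_compose[OF D.cdf_lim_at_bot filterlim_uminus_at_bot_at_top])
  have c2: "((\<lambda>l. measure D {..<-l}) \<longlongrightarrow> 0) at_top"
    by (rule tendsto_sandwich[OF _ _ tendsto_const c2']) (auto intro!: always_eventually t2)
  have "tail = (\<lambda>l. measure D {l<..} + measure D {..<-l})"
    by (rule ext) (simp add: tail_def evD)
  then show ?thesis using tendsto_add[OF c1 c2] by simp
qed

lemma tail_lim1: "((\<lambda>l. measure M (ev M X {l<..})) \<longlongrightarrow> 0) at_top"
  "((\<lambda>l. measure M (ev M X {..<-l})) \<longlongrightarrow> 0) at_top"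
  by (rule tendsto_sandwich[OF _ _ tendsto_const tail_lim]; auto simp: tail_def)+

lemma meas_lim: assumes "A \<in> sets borel" "B \<in> sets borel"
  shows "((\<lambda>l. measure M (ev M (Yh l) B \<inter> ev M U A)) \<longlongrightarrow> measure M (ev M Y B \<inter> ev M U A)) at_top"
proof (rule LIM_zero_cancel, rule Lim_null_comparison[OF _ tail_lim])
  show "\<forall>\<^sub>F l in at_top. norm (measure M (ev M (Yh l) B \<inter> ev M U A) - measure M (ev M Y B \<inter> ev M U A)) \<le> tail l"
    using eventually_gt_at_top[of 0] by eventually_elim (use tail_bound assms in auto)
qed

lemma disc_lim: assumes Q: "finite_partition Q" and R: "finite_partition R"
  shows "((\<lambda>l. disc_MI M U (Yh l) Q R) \<longlongrightarrow> disc_MI M U Y Q R) at_top"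
proof -
  have sQ: "A \<in> sets borel" if "A \<in> Q" for A using fp_sets[OF Q that] .
  have sR: "A \<in> sets borel" if "A \<in> R" for A using fp_sets[OF R that] .
  define G where "G l = (\<Sum>A\<in>Q. \<Sum>B\<in>R. eta (measure M (ev M U A \<inter> ev M (Yh l) B)))
     - (\<Sum>A\<in>Q. eta (measure M (ev M U A))) - (\<Sum>B\<in>R. eta (measure M (ev M (Yh l) B)))" for l
  have "(G \<longlongrightarrow> (\<Sum>A\<in>Q. \<Sum>B\<in>R. eta (measure M (ev M U A \<inter> ev M Y B)))
     - (\<Sum>A\<in>Q. eta (measure M (ev M U A))) - (\<Sum>B\<in>R. eta (measure M (ev M Y B)))) at_top"
    unfolding G_def
  proof (intro tendsto_diff tendsto_sum tendsto_const eta_tendsto measure_nonneg always_eventually allI)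
    fix A B assume "A \<in> Q" "B \<in> R"
    show "((\<lambda>l. measure M (ev M U A \<inter> ev M (Yh l) B)) \<longlongrightarrow> measure M (ev M U A \<inter> ev M Y B)) at_top"
      using meas_lim[OF sQ[OF \<open>A \<in> Q\<close>] sR[OF \<open>B \<in> R\<close>]] by (simp add: Int_commute)
  next
    fix B assume "B \<in> R"
    show "((\<lambda>l. measure M (ev M (Yh l) B)) \<longlongrightarrow> measure M (ev M Y B)) at_top"
      using meas_lim[OF _ sR[OF \<open>B \<in> R\<close>], of UNIV] by simp
  qed
  then have "(G \<longlongrightarrow> disc_MI M U Y Q R) at_top" using neg[OF P Q R mU mY] by simp
  moreover have "\<forall>\<^sub>F l in at_top. G l = disc_MI M U (Yh l) Q R"
    using eventually_gt_at_top[of 0] by eventually_elim (simp add: G_def neg[OF P Q R mU mYh])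
  ultimately show ?thesis by (rule Lim_transform_eventually)
qed

definition "Hf l = - (\<Sum>F\<in>FS l. eta (measure M (ev M X F)))"

lemma Hf_lim: "(Hf \<longlongrightarrow> 0) at_top"
proof -
  interpret prob_space M by (rule P)
  define m1 where "m1 l = measure M (ev M X {l<..})" for l
  define m2 where "m2 l = measure M (ev M X {..<-l})" for l
  have tot: "measure M (ev M X {-l..l}) = 1 - m1 l - m2 l" if "0 < l" for l
    using psum[OF P FS_fp[OF that] mX, of "space M" "space M"]
    by (simp add: sum_FS[OF that] m1_def m2_def prob_space)
  have lim: "((\<lambda>l. - (eta (1 - m1 l - m2 l) + eta (m1 l) + eta (m2 l))) \<longlongrightarrow> - (eta (1 - 0 - 0) + eta 0 + eta 0)) at_top"
  proof -
    have l1: "(m1 \<longlongrightarrow> 0) at_top" "(m2 \<longlongrightarrow> 0) at_top" using tail_lim1 unfolding m1_def m2_def by auto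
    have ev0: "\<forall>\<^sub>F l in at_top. 0 \<le> 1 - m1 l - m2 l"
      using eventually_gt_at_top[of 0]
    proof eventually_elim
      case (elim l)
      show ?case using tot[OF elim] measure_nonneg[of M "ev M X {-l..l}"] by simp
    qed
    have a0: "((\<lambda>l. eta (1 - m1 l - m2 l)) \<longlongrightarrow> eta (1 - 0 - 0)) at_top"
      by (rule eta_tendsto[OF tendsto_diff[OF tendsto_diff[OF tendsto_const l1(1)] l1(2)] ev0]) simp
    have a1: "((\<lambda>l. eta (m1 l)) \<longlongrightarrow> eta 0) at_top"
      by (rule eta_tendsto[OF l1(1)]) (auto simp: m1_def intro!: always_eventually)
    have a2: "((\<lambda>l. eta (m2 l)) \<longlongrightarrow> eta 0) at_top"
      by (rule eta_tendsto[OF l1(2)]) (auto simp: m2_def intro!: always_eventually)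
    show ?thesis by (rule tendsto_minus[OF tendsto_add[OF tendsto_add[OF a0 a1] a2]])
  qed
  have ev: "\<forall>\<^sub>F l in at_top. - (eta (1 - m1 l - m2 l) + eta (m1 l) + eta (m2 l)) = Hf l"
    using eventually_gt_at_top[of 0]
  proof eventually_elim
    case (elim l)
    show ?case unfolding Hf_def sum_FS[OF elim] tot[OF elim] m1_def m2_def ..
  qed
  have lim': "((\<lambda>l. - (eta (1 - m1 l - m2 l) + eta (m1 l) + eta (m2 l))) \<longlongrightarrow> 0) at_top"
    using lim by simp
  show ?thesis by (rule Lim_transform_eventually[OF lim' ev])
qed

end



theorem mainTheorem10:
  fixes M :: "'a measure" and U X Y :: "'a \<Rightarrow> real"
    and Yh :: "real \<Rightarrow> 'a \<Rightarrow> real" and W :: "real \<Rightarrow> real measure"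
  assumes "prob_space M"
    and "U \<in> borel_measurable M" and "X \<in> borel_measurable M" and "Y \<in> borel_measurable M"
    and "\<And>l. l > 0 \<Longrightarrow> Yh l \<in> borel_measurable M"
    and "W \<in> borel \<rightarrow>\<^sub>M prob_algebra borel"
    and "\<And>A B C. A \<in> sets borel \<Longrightarrow> B \<in> sets borel \<Longrightarrow> C \<in> sets borel \<Longrightarrow>
           measure M {\<omega>\<in>space M. U \<omega> \<in> A \<and> X \<omega> \<in> B \<and> Y \<omega> \<in> C}
         = (\<integral>\<omega>. indicator {\<omega>\<in>space M. U \<omega> \<in> A \<and> X \<omega> \<in> B} \<omega> * measure (W (X \<omega>)) C \<partial>M)"
    and "\<And>l A B C. l > 0 \<Longrightarrow> A \<in> sets borel \<Longrightarrow> B \<in> sets borel \<Longrightarrow> C \<in> sets borel \<Longrightarrow>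
           measure M {\<omega>\<in>space M. U \<omega> \<in> A \<and> X \<omega> \<in> B \<and> Yh l \<omega> \<in> C}
         = (\<integral>\<omega>. indicator {\<omega>\<in>space M. U \<omega> \<in> A \<and> X \<omega> \<in> B} \<omega> * measure (W (clip l (X \<omega>))) C \<partial>M)"
  shows "((\<lambda>l. gen_MI M U (Yh l)) \<longlongrightarrow> gen_MI M U Y) at_top"
  proof -
  interpret setting M U X Y Yh W by (rule setting.intro[OF assms])
  define S where "S = {(Q, R). finite_partition Q \<and> finite_partition R}"
  have gen: "gen_MI M U V = (SUP QR\<in>S. ereal (disc_MI M U V (fst QR) (snd QR)))" for V
    by (simp add: gen_MI_def S_def)
  have fpU: "finite_partition {UNIV::real set}" unfolding finite_partition_def disjoint_def by auto
  then have triv: "({UNIV}, {UNIV}) \<in> S" unfolding S_def by simp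
  have up: "gen_MI M U (Yh l) \<le> gen_MI M U Y + ereal (Hf l)" if l: "0 < l" for l
    unfolding gen[of "Yh l"]
  proof (rule SUP_least)
    fix QR assume "QR \<in> S"
    then have Q: "finite_partition (fst QR)" and R: "finite_partition (snd QR)" unfolding S_def by auto
    have "ereal (disc_MI M U (Yh l) (fst QR) (snd QR)) \<le> ereal (disc_MI M U Y (fst QR) (snd QR)) + ereal (Hf l)"
      using upper[OF l Q R] by (simp add: Hf_def)
    also have "\<dots> \<le> gen_MI M U Y + ereal (Hf l)"
      unfolding gen[of Y] by (intro add_right_mono SUP_upper \<open>QR \<in> S\<close>)
    finally show "ereal (disc_MI M U (Yh l) (fst QR) (snd QR)) \<le> gen_MI M U Y + ereal (Hf l)" .
  qed
  have low: "ereal (disc_MI M U (Yh l) Q R) \<le> gen_MI M U (Yh l)" if "(Q, R) \<in> S" for Q R l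
    unfolding gen[of "Yh l"] using SUP_upper[OF that, of "\<lambda>QR. ereal (disc_MI M U (Yh l) (fst QR) (snd QR))"] by simp
  show ?thesis
  proof (rule order_tendstoI)
    fix a assume "a < gen_MI M U Y"
    then obtain QR where QR: "QR \<in> S" "a < ereal (disc_MI M U Y (fst QR) (snd QR))"
      unfolding gen[of Y] less_SUP_iff by blast
    then have Q: "finite_partition (fst QR)" and R: "finite_partition (snd QR)" unfolding S_def by auto
    have "\<forall>\<^sub>F l in at_top. a < ereal (disc_MI M U (Yh l) (fst QR) (snd QR))"
      by (rule order_tendstoD(1)[OF tendsto_ereal[OF disc_lim[OF Q R]] QR(2)])
    then show "\<forall>\<^sub>F l in at_top. a < gen_MI M U (Yh l)"
    proof eventually_elim
      case (elim l)
      have "(fst QR, snd QR) \<in> S" using QR by simp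
      from low[OF this, of l] elim show ?case by simp
    qed
  next
    fix a assume a: "gen_MI M U Y < a"
    have "ereal (disc_MI M U Y {UNIV} {UNIV}) \<le> gen_MI M U Y"
      unfolding gen[of Y] using SUP_upper[OF triv, of "\<lambda>QR. ereal (disc_MI M U Y (fst QR) (snd QR))"] by simp
    then have "gen_MI M U Y \<noteq> -\<infinity>" by auto
    moreover have "gen_MI M U Y \<noteq> \<infinity>" using a by auto
    ultimately obtain g where g: "gen_MI M U Y = ereal g" by (cases "gen_MI M U Y") auto
    have "((\<lambda>l. ereal (g + Hf l)) \<longlongrightarrow> ereal (g + 0)) at_top"
      by (intro tendsto_ereal tendsto_add tendsto_const Hf_lim)
    then have "\<forall>\<^sub>F l in at_top. ereal (g + Hf l) < a"
      by (rule order_tendstoD(2)) (use a g in simp)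
    with eventually_gt_at_top[of 0]
    show "\<forall>\<^sub>F l in at_top. gen_MI M U (Yh l) < a"
    proof eventually_elim
      case (elim l)
      then have "gen_MI M U (Yh l) \<le> ereal (g + Hf l)" using up[of l] g by simp
      then show ?case using elim by simp
    qed
  qed
qed

end
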